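(* Let $P:\mathcal{C}^{\mathrm{op}}\to\mathbf{Pos}$ be a universal slat-doctrine such that $\mathcal{C}$ has exponents, and consider its existential completion $P^{ex}$, with left adjoints $\exists^{ex}$ and right adjoints $\forall^{ex}$ along product projections. For all objects $A_1,A_2,B$ of $\mathcal{C}$ and every $\alpha\in P(A_1\times A_2\times B)$, $$\forall^{ex}_{\mathrm{pr}_1}\,\exists^{ex}_{\langle\mathrm{pr}_1,\mathrm{pr}_2\rangle}\,\eta_{A_1\times A_2\times B}(\alpha)=\exists^{ex}_{\mathrm{pr}'_1}\,\forall^{ex}_{\langle\mathrm{pr}_1,\mathrm{pr}_3\rangle}\,\eta_{A_1\times A_2\times B^{A_2}}\,P_{\langle\mathrm{pr}_1,\mathrm{pr}_2,\mathrm{ev}\langle\mathrm{pr}_2,\mathrm{pr}_3\rangle\rangle}(\alpha)$$ in $P^{ex}(A_1)$, where: on the left, $\langle\mathrm{pr}_1,\mathrm{pr}_2\rangle:A_1\times A_2\times B\to A_1\times A_2$ and $\mathrm{pr}_1:A_1\times A_2\to A_1$; on the right, $\mathrm{pr}_i$ are the projections of $A_1\times A_2\times B^{A_2}$, $\mathrm{ev}:A_2\times B^{A_2}\to B$ is evaluation, $\langle\mathrm{pr}_1,\mathrm{pr}_3\rangle:A_1\times A_2\times B^{A_2}\to A_1\times B^{A_2}$, and $\mathrm{pr}'_1:A_1\times B^{A_2}\to A_1$.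
   Context: A slat-doctrine is a functor $P:\mathcal{C}^{\mathrm{op}}\to\mathbf{Pos}$ with $\mathcal{C}$ having finite products; $P_f:P(Y)\to P(X)$ is reindexing along $f:X\to Y$. It is existential (resp. universal) if each $P_{\mathrm{pr}_i}:P(A_i)\to P(A_1\times A_2)$ along a product projection has a left adjoint $\exists_{\mathrm{pr}_i}$ (resp. right adjoint $\forall_{\mathrm{pr}_i}$) satisfying Beck–Chevalley: for every pullback of a projection $\mathrm{pr}:X\to A$ along $f:A'\to A$, with resulting projection $\mathrm{pr}':X'\to A'$ and $f':X'\to X$, $\exists_{\mathrm{pr}'}P_{f'}=P_f\exists_{\mathrm{pr}}$ (resp. with $\forall$). Existential completion: $P^{ex}(A)$ is the poset (reflection of the preorder) of triples $(A,B,\alpha)$ with $\alpha\in P(A\times B)$, where $(A,B,\alpha)\le(A,C,\beta)$ iff there is $f:A\times B\to C$ with $\alpha\le P_{\langle\mathrm{pr}_A,f\rangle}(\beta)$; for $f:A\to C$, $P^{ex}_f(C,D,\gamma)=(A,D,P_{f\times 1_D}(\gamma))$. $P^{ex}$ is existential, with $\exists^{ex}_{\mathrm{pr}_1}(A_1\times A_2,B,\beta)=(A_1,A_2\times B,\beta)$, and when $P$ is universal and $\mathcal{C}$ has exponents, $P^{ex}$ is also universal; $\forall^{ex}$ denotes its (unique) right adjoints to reindexing along projections. The map $\eta_A:P(A)\to P^{ex}(A)$ sends $\alpha$ to $(A,1,P_{\mathrm{pr}_A}(\alpha))$, with $\mathrm{pr}_A:A\times 1\to A$. *)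

theory Defs
  imports Main
begin

text \<open>Composition c_comp g f is g after f.
  c_prod A B is a chosen product with projections c_p1 A B, c_p2 A B and pairing c_pair;
  c_term is a terminal object; c_exp A B is the exponent B^A with evaluation
  c_ev A B : A x B^A -> B.\<close>

record ('o, 'm) cat =
  c_dom  :: "'m \<Rightarrow> 'o"
  c_cod  :: "'m \<Rightarrow> 'o"
  c_comp :: "'m \<Rightarrow> 'm \<Rightarrow> 'm"
  c_id   :: "'o \<Rightarrow> 'm"
  c_prod :: "'o \<Rightarrow> 'o \<Rightarrow> 'o"
  c_p1   :: "'o \<Rightarrow> 'o \<Rightarrow> 'm"
  c_p2   :: "'o \<Rightarrow> 'o \<Rightarrow> 'm"
  c_pair :: "'m \<Rightarrow> 'm \<Rightarrow> 'm"
  c_term :: "'o"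
  c_bang :: "'o \<Rightarrow> 'm"
  c_exp  :: "'o \<Rightarrow> 'o \<Rightarrow> 'o"
  c_ev   :: "'o \<Rightarrow> 'o \<Rightarrow> 'm"

definition is_category :: "('o, 'm) cat \<Rightarrow> bool" where
  "is_category C \<longleftrightarrow>
     (\<forall>A. c_dom C (c_id C A) = A \<and> c_cod C (c_id C A) = A) \<and>
     (\<forall>f g. c_cod C f = c_dom C g \<longrightarrow>
        c_dom C (c_comp C g f) = c_dom C f \<and> c_cod C (c_comp C g f) = c_cod C g) \<and>
     (\<forall>f. c_comp C (c_id C (c_cod C f)) f = f \<and> c_comp C f (c_id C (c_dom C f)) = f) \<and>
     (\<forall>f g h. c_cod C f = c_dom C g \<and> c_cod C g = c_dom C h \<longrightarrow>
        c_comp C h (c_comp C g f) = c_comp C (c_comp C h g) f)"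

definition has_finite_products :: "('o, 'm) cat \<Rightarrow> bool" where
  "has_finite_products C \<longleftrightarrow>
     (\<forall>A B. c_dom C (c_p1 C A B) = c_prod C A B \<and> c_cod C (c_p1 C A B) = A \<and>
            c_dom C (c_p2 C A B) = c_prod C A B \<and> c_cod C (c_p2 C A B) = B) \<and>
     (\<forall>f g. c_dom C f = c_dom C g \<longrightarrow>
        c_dom C (c_pair C f g) = c_dom C f \<and>
        c_cod C (c_pair C f g) = c_prod C (c_cod C f) (c_cod C g) \<and>
        c_comp C (c_p1 C (c_cod C f) (c_cod C g)) (c_pair C f g) = f \<and>
        c_comp C (c_p2 C (c_cod C f) (c_cod C g)) (c_pair C f g) = g) \<and>
     (\<forall>h A B. c_cod C h = c_prod C A B \<longrightarrow>
        c_pair C (c_comp C (c_p1 C A B) h) (c_comp C (c_p2 C A B) h) = h) \<and>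
     (\<forall>A. c_dom C (c_bang C A) = A \<and> c_cod C (c_bang C A) = c_term C) \<and>
     (\<forall>f. c_cod C f = c_term C \<longrightarrow> f = c_bang C (c_dom C f))"

definition has_exponents :: "('o, 'm) cat \<Rightarrow> bool" where
  "has_exponents C \<longleftrightarrow>
     (\<forall>A B. c_dom C (c_ev C A B) = c_prod C A (c_exp C A B) \<and> c_cod C (c_ev C A B) = B) \<and>
     (\<forall>A B X h. c_dom C h = c_prod C A X \<and> c_cod C h = B \<longrightarrow>
        (\<exists>!k. c_dom C k = X \<and> c_cod C k = c_exp C A B \<and>
              c_comp C (c_ev C A B)
                (c_pair C (c_p1 C A X) (c_comp C k (c_p2 C A X))) = h))"

definition cross_r :: "('o, 'm) cat \<Rightarrow> 'm \<Rightarrow> 'o \<Rightarrow> 'm" where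
  "cross_r C f D = c_pair C (c_comp C f (c_p1 C (c_dom C f) D)) (c_p2 C (c_dom C f) D)"

definition cross_l :: "('o, 'm) cat \<Rightarrow> 'o \<Rightarrow> 'm \<Rightarrow> 'm" where
  "cross_l C D f = c_pair C (c_p1 C D (c_dom C f)) (c_comp C f (c_p2 C D (c_dom C f)))"

record ('o, 'm, 'p) doctr =
  Pc  :: "'o \<Rightarrow> 'p set"
  ple :: "'o \<Rightarrow> 'p \<Rightarrow> 'p \<Rightarrow> bool"
  pre :: "'m \<Rightarrow> 'p \<Rightarrow> 'p"            (* reindexing P_f : P(cod f) -> P(dom f) *)

definition doctrine :: "('o, 'm) cat \<Rightarrow> ('o, 'm, 'p) doctr \<Rightarrow> bool" where
  "doctrine C P \<longleftrightarrow>
     (\<forall>A. \<forall>x\<in>Pc P A. ple P A x x) \<and>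
     (\<forall>A. \<forall>x\<in>Pc P A. \<forall>y\<in>Pc P A. \<forall>z\<in>Pc P A. ple P A x y \<and> ple P A y z \<longrightarrow> ple P A x z) \<and>
     (\<forall>A. \<forall>x\<in>Pc P A. \<forall>y\<in>Pc P A. ple P A x y \<and> ple P A y x \<longrightarrow> x = y) \<and>
     (\<forall>f. \<forall>x\<in>Pc P (c_cod C f). pre P f x \<in> Pc P (c_dom C f)) \<and>
     (\<forall>f. \<forall>x\<in>Pc P (c_cod C f). \<forall>y\<in>Pc P (c_cod C f).
          ple P (c_cod C f) x y \<longrightarrow> ple P (c_dom C f) (pre P f x) (pre P f y)) \<and>
     (\<forall>A. \<forall>x\<in>Pc P A. pre P (c_id C A) x = x) \<and>
     (\<forall>f g. c_cod C f = c_dom C g \<longrightarrow>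
        (\<forall>x\<in>Pc P (c_cod C g). pre P (c_comp C g f) x = pre P f (pre P g x)))"

definition P_radj :: "('o, 'm) cat \<Rightarrow> ('o, 'm, 'p) doctr \<Rightarrow> 'm \<Rightarrow> 'p \<Rightarrow> 'p \<Rightarrow> bool" where
  "P_radj C P m \<beta> \<gamma> \<longleftrightarrow> \<gamma> \<in> Pc P (c_cod C m) \<and>
     (\<forall>\<delta>\<in>Pc P (c_cod C m). ple P (c_cod C m) \<delta> \<gamma> \<longleftrightarrow> ple P (c_dom C m) (pre P m \<delta>) \<beta>)"

definition P_forall :: "('o, 'm) cat \<Rightarrow> ('o, 'm, 'p) doctr \<Rightarrow> 'm \<Rightarrow> 'p \<Rightarrow> 'p" where
  "P_forall C P m \<beta> = (SOME \<gamma>. P_radj C P m \<beta> \<gamma>)"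

definition universal :: "('o, 'm) cat \<Rightarrow> ('o, 'm, 'p) doctr \<Rightarrow> bool" where
  "universal C P \<longleftrightarrow>
     (\<forall>A D. \<forall>\<beta>\<in>Pc P (c_prod C A D).
        (\<exists>\<gamma>. P_radj C P (c_p1 C A D) \<beta> \<gamma>) \<and> (\<exists>\<gamma>. P_radj C P (c_p2 C A D) \<beta> \<gamma>)) \<and>
     (\<forall>f D. \<forall>\<beta>\<in>Pc P (c_prod C (c_cod C f) D).
        pre P f (P_forall C P (c_p1 C (c_cod C f) D) \<beta>) =
        P_forall C P (c_p1 C (c_dom C f) D) (pre P (cross_r C f D) \<beta>)) \<and>
     (\<forall>f D. \<forall>\<beta>\<in>Pc P (c_prod C D (c_cod C f)).
        pre P f (P_forall C P (c_p2 C D (c_cod C f)) \<beta>) =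
        P_forall C P (c_p2 C D (c_dom C f)) (pre P (cross_l C D f) \<beta>))"

text \<open>An element (D, alpha) of P^ex(A) represents the triple (A, D, alpha), alpha in P(A x D).
  P^ex(A) is the poset reflection of the preorder ex_le; equality in P^ex(A) is
  mutual ex_le.\<close>

definition ex_carrier :: "('o, 'm) cat \<Rightarrow> ('o, 'm, 'p) doctr \<Rightarrow> 'o \<Rightarrow> ('o \<times> 'p) set" where
  "ex_carrier C P A = {(D, \<alpha>). \<alpha> \<in> Pc P (c_prod C A D)}"

definition ex_le :: "('o, 'm) cat \<Rightarrow> ('o, 'm, 'p) doctr \<Rightarrow> 'o \<Rightarrow> 'o \<times> 'p \<Rightarrow> 'o \<times> 'p \<Rightarrow> bool" where
  "ex_le C P A x y \<longleftrightarrow>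
     (\<exists>h. c_dom C h = c_prod C A (fst x) \<and> c_cod C h = fst y \<and>
          ple P (c_prod C A (fst x)) (snd x) (pre P (c_pair C (c_p1 C A (fst x)) h) (snd y)))"

definition ex_eq :: "('o, 'm) cat \<Rightarrow> ('o, 'm, 'p) doctr \<Rightarrow> 'o \<Rightarrow> 'o \<times> 'p \<Rightarrow> 'o \<times> 'p \<Rightarrow> bool" where
  "ex_eq C P A x y \<longleftrightarrow> ex_le C P A x y \<and> ex_le C P A y x"

definition ex_re :: "('o, 'm) cat \<Rightarrow> ('o, 'm, 'p) doctr \<Rightarrow> 'm \<Rightarrow> 'o \<times> 'p \<Rightarrow> 'o \<times> 'p" where
  "ex_re C P f x = (fst x, pre P (cross_r C f (fst x)) (snd x))"

text \<open>Left / right adjoints to P^ex_m (values chosen among representatives).\<close>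

definition ex_exists :: "('o, 'm) cat \<Rightarrow> ('o, 'm, 'p) doctr \<Rightarrow> 'm \<Rightarrow> 'o \<times> 'p \<Rightarrow> 'o \<times> 'p" where
  "ex_exists C P m x = (SOME y. y \<in> ex_carrier C P (c_cod C m) \<and>
     (\<forall>z\<in>ex_carrier C P (c_cod C m).
        ex_le C P (c_cod C m) y z \<longleftrightarrow> ex_le C P (c_dom C m) x (ex_re C P m z)))"

definition ex_forall :: "('o, 'm) cat \<Rightarrow> ('o, 'm, 'p) doctr \<Rightarrow> 'm \<Rightarrow> 'o \<times> 'p \<Rightarrow> 'o \<times> 'p" where
  "ex_forall C P m x = (SOME y. y \<in> ex_carrier C P (c_cod C m) \<and>
     (\<forall>z\<in>ex_carrier C P (c_cod C m).
        ex_le C P (c_cod C m) z y \<longleftrightarrow> ex_le C P (c_dom C m) (ex_re C P m z) x))"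

definition ex_eta :: "('o, 'm) cat \<Rightarrow> ('o, 'm, 'p) doctr \<Rightarrow> 'o \<Rightarrow> 'p \<Rightarrow> 'o \<times> 'p" where
  "ex_eta C P A \<alpha> = (c_term C, pre P (c_p1 C A (c_term C)) \<alpha>)"

end

theory Submission
  imports Defs
begin


locale dctx =
  fixes C :: "('o, 'm) cat" and P :: "('o, 'm, 'p) doctr"
  assumes cat: "is_category C" and fp: "has_finite_products C" and exs: "has_exponents C"
    and doc: "doctrine C P" and univ: "universal C P"
begin

abbreviation "dm \<equiv> c_dom C"
abbreviation "cd \<equiv> c_cod C"
abbreviation "cmp \<equiv> c_comp C"
abbreviation "pr \<equiv> c_pair C"
abbreviation "pr1 \<equiv> c_p1 C"
abbreviation "pr2 \<equiv> c_p2 C"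
abbreviation "prd \<equiv> c_prod C"

lemma dom_p1[simp]: "dm (pr1 A B) = prd A B" and cod_p1[simp]: "cd (pr1 A B) = A"
  and dom_p2[simp]: "dm (pr2 A B) = prd A B" and cod_p2[simp]: "cd (pr2 A B) = B"
  using fp unfolding has_finite_products_def by auto

lemma dom_id[simp]: "dm (c_id C A) = A" and cod_id[simp]: "cd (c_id C A) = A"
  using cat unfolding is_category_def by auto

lemma dom_comp[simp]: "cd f = dm g \<Longrightarrow> dm (cmp g f) = dm f"
  and cod_comp[simp]: "cd f = dm g \<Longrightarrow> cd (cmp g f) = cd g"
  using cat unfolding is_category_def by auto

lemma dom_pair[simp]: "dm f = dm g \<Longrightarrow> dm (pr f g) = dm f"
  and cod_pair[simp]: "dm f = dm g \<Longrightarrow> cd (pr f g) = prd (cd f) (cd g)"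
  using fp unfolding has_finite_products_def by auto

lemma dom_bang[simp]: "dm (c_bang C A) = A" and cod_bang[simp]: "cd (c_bang C A) = c_term C"
  using fp unfolding has_finite_products_def by auto

lemma dom_ev[simp]: "dm (c_ev C A B) = prd A (c_exp C A B)" and cod_ev[simp]: "cd (c_ev C A B) = B"
  using exs unfolding has_exponents_def by auto

lemma p1_pair[simp]: "dm f = dm g \<Longrightarrow> cd f = A \<Longrightarrow> cd g = B \<Longrightarrow> cmp (pr1 A B) (pr f g) = f"
  and p2_pair[simp]: "dm f = dm g \<Longrightarrow> cd f = A \<Longrightarrow> cd g = B \<Longrightarrow> cmp (pr2 A B) (pr f g) = g"
  using fp unfolding has_finite_products_def by auto

lemma assoc[simp]: "cd f = dm g \<Longrightarrow> cd g = dm h \<Longrightarrow> cmp (cmp h g) f = cmp h (cmp g f)"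
  using cat unfolding is_category_def by auto

lemma id_l[simp]: "cd f = A \<Longrightarrow> cmp (c_id C A) f = f"
  and id_r[simp]: "dm f = A \<Longrightarrow> cmp f (c_id C A) = f"
  using cat unfolding is_category_def by auto

lemma eta[simp]: "cd f = prd A B \<Longrightarrow> pr (cmp (pr1 A B) f) (cmp (pr2 A B) f) = f"
  using fp unfolding has_finite_products_def by auto

lemma pair_proj[simp]: "pr (pr1 A B) (pr2 A B) = c_id C (prd A B)"
  using eta[of "c_id C (prd A B)" A B] by simp

lemma pair_comp[simp]: "dm f = dm g \<Longrightarrow> cd k = dm f \<Longrightarrow> cmp (pr f g) k = pr (cmp f k) (cmp g k)"
proof -
  assume a: "dm f = dm g" "cd k = dm f"
  have "pr (cmp (pr1 (cd f) (cd g)) (cmp (pr f g) k)) (cmp (pr2 (cd f) (cd g)) (cmp (pr f g) k)) = cmp (pr f g) k"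
    using a by (intro eta) simp
  moreover have "cmp (pr1 (cd f) (cd g)) (cmp (pr f g) k) = cmp f k"
    using a assoc[of k "pr f g" "pr1 (cd f) (cd g)"] by simp
  moreover have "cmp (pr2 (cd f) (cd g)) (cmp (pr f g) k) = cmp g k"
    using a assoc[of k "pr f g" "pr2 (cd f) (cd g)"] by simp
  ultimately show ?thesis by simp
qed

lemma bang_unique: "cd f = c_term C \<Longrightarrow> f = c_bang C (dm f)"
  using fp unfolding has_finite_products_def by auto

abbreviation "Pc' \<equiv> Pc P"
abbreviation "ple' \<equiv> ple P"
abbreviation "pre' \<equiv> pre P"

lemma ple_refl: "x \<in> Pc' A \<Longrightarrow> ple' A x x"
  using doc unfolding doctrine_def by blast
lemma ple_trans: "x \<in> Pc' A \<Longrightarrow> y \<in> Pc' A \<Longrightarrow> z \<in> Pc' A \<Longrightarrow> ple' A x y \<Longrightarrow> ple' A y z \<Longrightarrow> ple' A x z"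
  using doc unfolding doctrine_def by blast
lemma pre_closed[simp]: "x \<in> Pc' (cd f) \<Longrightarrow> dm f = A \<Longrightarrow> pre' f x \<in> Pc' A"
  using doc unfolding doctrine_def by blast
lemma pre_mono: "x \<in> Pc' (cd f) \<Longrightarrow> y \<in> Pc' (cd f) \<Longrightarrow> ple' (cd f) x y \<Longrightarrow> ple' (dm f) (pre' f x) (pre' f y)"
  using doc unfolding doctrine_def by blast
lemma pre_id[simp]: "x \<in> Pc' A \<Longrightarrow> pre' (c_id C A) x = x"
  using doc unfolding doctrine_def by blast
lemma pre_pre[simp]: "cd f = dm g \<Longrightarrow> x \<in> Pc' (cd g) \<Longrightarrow> pre' f (pre' g x) = pre' (cmp g f) x"
proof -
  assume a: "cd f = dm g" "x \<in> Pc' (cd g)"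
  have "\<forall>f g. cd f = dm g \<longrightarrow> (\<forall>x\<in>Pc' (cd g). pre' (cmp g f) x = pre' f (pre' g x))"
    using doc unfolding doctrine_def by (elim conjE) assumption
  then show ?thesis using a by simp
qed

lemma pre_mono': "x \<in> Pc' B \<Longrightarrow> y \<in> Pc' B \<Longrightarrow> cd f = B \<Longrightarrow> dm f = A \<Longrightarrow> ple' B x y \<Longrightarrow> ple' A (pre' f x) (pre' f y)"
  using pre_mono by blast

lemma univ1: "\<forall>A D. \<forall>\<beta>\<in>Pc' (prd A D). (\<exists>\<gamma>. P_radj C P (pr1 A D) \<beta> \<gamma>)"
  using univ unfolding universal_def by blast

lemma all_radj: "\<beta> \<in> Pc' (prd A D) \<Longrightarrow> P_radj C P (pr1 A D) \<beta> (P_forall C P (pr1 A D) \<beta>)"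
  unfolding P_forall_def using univ1 by (meson someI_ex)

lemma all_closed[simp]: "\<beta> \<in> Pc' (prd A D) \<Longrightarrow> P_forall C P (pr1 A D) \<beta> \<in> Pc' A"
  using all_radj[of \<beta> A D] unfolding P_radj_def by simp

lemma all_adj: "\<beta> \<in> Pc' (prd A D) \<Longrightarrow> \<delta> \<in> Pc' A \<Longrightarrow>
   ple' A \<delta> (P_forall C P (pr1 A D) \<beta>) \<longleftrightarrow> ple' (prd A D) (pre' (pr1 A D) \<delta>) \<beta>"
  using all_radj[of \<beta> A D] unfolding P_radj_def by simp

lemma BC: "\<beta> \<in> Pc' (prd (cd f) D) \<Longrightarrow>
  pre' f (P_forall C P (pr1 (cd f) D) \<beta>) = P_forall C P (pr1 (dm f) D) (pre' (cross_r C f D) \<beta>)"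
proof -
  assume a: "\<beta> \<in> Pc' (prd (cd f) D)"
  have "\<forall>f D. \<forall>\<beta>\<in>Pc' (prd (cd f) D).
        pre' f (P_forall C P (pr1 (cd f) D) \<beta>) =
        P_forall C P (pr1 (dm f) D) (pre' (cross_r C f D) \<beta>)"
    using univ unfolding universal_def by (elim conjE) assumption
  then show ?thesis using a by blast
qed

end

context dctx begin

lemma carrier_iff[simp]: "(D,\<delta>) \<in> ex_carrier C P A \<longleftrightarrow> \<delta> \<in> Pc' (prd A D)"
  by (simp add: ex_carrier_def)

lemma ex_le_iff: "ex_le C P A (D,\<delta>) (D',\<delta>') \<longleftrightarrow>
   (\<exists>h. dm h = prd A D \<and> cd h = D' \<and> ple' (prd A D) \<delta> (pre' (pr (pr1 A D) h) \<delta>'))"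
  by (simp add: ex_le_def)

lemma ex_re_pair[simp]: "ex_re C P f (D,\<zeta>) = (D, pre' (cross_r C f D) \<zeta>)"
  by (simp add: ex_re_def)

lemma cross_r_dom[simp]: "dm (cross_r C f D) = prd (dm f) D"
  and cross_r_cod[simp]: "cd (cross_r C f D) = prd (cd f) D"
  by (simp_all add: cross_r_def)

lemma ex_refl: "y \<in> ex_carrier C P A \<Longrightarrow> ex_le C P A y y"
proof (cases y)
  case (Pair D \<delta>)
  assume "y \<in> ex_carrier C P A"
  then have d: "\<delta> \<in> Pc' (prd A D)" using Pair by simp
  show ?thesis unfolding Pair ex_le_iff
    by (rule exI[of _ "pr2 A D"]) (simp add: d ple_refl)
qed

lemma ex_trans: "x \<in> ex_carrier C P A \<Longrightarrow> y \<in> ex_carrier C P A \<Longrightarrow> z \<in> ex_carrier C P A \<Longrightarrow>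
  ex_le C P A x y \<Longrightarrow> ex_le C P A y z \<Longrightarrow> ex_le C P A x z"
proof -
  assume cx: "x \<in> ex_carrier C P A" and cy: "y \<in> ex_carrier C P A" and cz: "z \<in> ex_carrier C P A"
    and xy: "ex_le C P A x y" and yz: "ex_le C P A y z"
  obtain D1 \<delta>1 where x: "x = (D1,\<delta>1)" by (cases x)
  obtain D2 \<delta>2 where y: "y = (D2,\<delta>2)" by (cases y)
  obtain D3 \<delta>3 where z: "z = (D3,\<delta>3)" by (cases z)
  have c1: "\<delta>1 \<in> Pc' (prd A D1)" and c2: "\<delta>2 \<in> Pc' (prd A D2)" and c3: "\<delta>3 \<in> Pc' (prd A D3)"
    using cx cy cz x y z by auto
  obtain h1 where h1: "dm h1 = prd A D1" "cd h1 = D2" "ple' (prd A D1) \<delta>1 (pre' (pr (pr1 A D1) h1) \<delta>2)"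
    using xy unfolding x y ex_le_iff by blast
  obtain h2 where h2: "dm h2 = prd A D2" "cd h2 = D3" "ple' (prd A D2) \<delta>2 (pre' (pr (pr1 A D2) h2) \<delta>3)"
    using yz unfolding y z ex_le_iff by blast
  have m: "ple' (prd A D1) (pre' (pr (pr1 A D1) h1) \<delta>2) (pre' (pr (pr1 A D1) h1) (pre' (pr (pr1 A D2) h2) \<delta>3))"
    by (rule pre_mono') (use h1 h2 c2 c3 in simp_all)
  have e: "pre' (pr (pr1 A D1) h1) (pre' (pr (pr1 A D2) h2) \<delta>3) = pre' (pr (pr1 A D1) (cmp h2 (pr (pr1 A D1) h1))) \<delta>3"
    using h1 h2 c3 by simp
  show ?thesis unfolding x z ex_le_iff
    apply (rule exI[of _ "cmp h2 (pr (pr1 A D1) h1)"])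
    using h1 h2 c1 c2 c3 m e ple_trans by (metis (no_types, lifting) cod_comp cod_pair cod_p1 dom_comp dom_pair dom_p1 pre_closed)
qed

lemma re_carrier: "z \<in> ex_carrier C P (cd f) \<Longrightarrow> ex_re C P f z \<in> ex_carrier C P (dm f)"
  by (cases z) simp

definition EXP where "EXP m x y \<longleftrightarrow> y \<in> ex_carrier C P (cd m) \<and>
     (\<forall>z\<in>ex_carrier C P (cd m).
        ex_le C P (cd m) y z \<longleftrightarrow> ex_le C P (dm m) x (ex_re C P m z))"
definition ALLP where "ALLP m x y \<longleftrightarrow> y \<in> ex_carrier C P (cd m) \<and>
     (\<forall>z\<in>ex_carrier C P (cd m).
        ex_le C P (cd m) z y \<longleftrightarrow> ex_le C P (dm m) (ex_re C P m z) x)"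

lemma EXP_some: "EXP m x y \<Longrightarrow> EXP m x (ex_exists C P m x)"
  unfolding EXP_def ex_exists_def by (rule someI)
lemma ALLP_some: "ALLP m x y \<Longrightarrow> ALLP m x (ex_forall C P m x)"
  unfolding ALLP_def ex_forall_def by (rule someI)

lemma EXP_unique: "EXP m x y \<Longrightarrow> EXP m x y' \<Longrightarrow> ex_eq C P (cd m) y y'"
  unfolding EXP_def ex_eq_def by (meson ex_refl)
lemma ALLP_unique: "ALLP m x y \<Longrightarrow> ALLP m x y' \<Longrightarrow> ex_eq C P (cd m) y y'"
  unfolding ALLP_def ex_eq_def by (meson ex_refl)

lemma EXP_transfer: "x \<in> ex_carrier C P (dm m) \<Longrightarrow> x' \<in> ex_carrier C P (dm m) \<Longrightarrow>
   ex_eq C P (dm m) x x' \<Longrightarrow> EXP m x' y \<Longrightarrow> EXP m x y"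
  unfolding EXP_def ex_eq_def by (meson ex_trans re_carrier)
lemma ALLP_transfer: "x \<in> ex_carrier C P (dm m) \<Longrightarrow> x' \<in> ex_carrier C P (dm m) \<Longrightarrow>
   ex_eq C P (dm m) x x' \<Longrightarrow> ALLP m x' y \<Longrightarrow> ALLP m x y"
  unfolding ALLP_def ex_eq_def by (meson ex_trans re_carrier)

lemma EXP_carrier: "EXP m x y \<Longrightarrow> y \<in> ex_carrier C P (cd m)" unfolding EXP_def by simp
lemma ALLP_carrier: "ALLP m x y \<Longrightarrow> y \<in> ex_carrier C P (cd m)" unfolding ALLP_def by simp

lemma eq_trans: "x \<in> ex_carrier C P A \<Longrightarrow> y \<in> ex_carrier C P A \<Longrightarrow> z \<in> ex_carrier C P A \<Longrightarrow>
  ex_eq C P A x y \<Longrightarrow> ex_eq C P A y z \<Longrightarrow> ex_eq C P A x z"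
  unfolding ex_eq_def by (meson ex_trans)
lemma eq_sym: "ex_eq C P A x y \<Longrightarrow> ex_eq C P A y x"
  unfolding ex_eq_def by simp

end

context dctx begin

lemma Lex: assumes a: "\<alpha> \<in> Pc' (prd A B)"
  shows "EXP (pr1 A B) (c_term C, pre' (pr1 (prd A B) (c_term C)) \<alpha>) (B, \<alpha>)"
  unfolding EXP_def
proof (simp add: a, intro ballI)
  fix z assume z: "z \<in> ex_carrier C P A"
  obtain D \<zeta> where zz: "z = (D,\<zeta>)" by (cases z)
  have cz: "\<zeta> \<in> Pc' (prd A D)" using z zz by simp
  let ?X = "prd A B" and ?T = "c_term C"
  show "ex_le C P A (B, \<alpha>) z = ex_le C P (prd A B) (?T, pre' (pr1 ?X ?T) \<alpha>) (ex_re C P (pr1 A B) z)"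
  proof
    assume "ex_le C P A (B, \<alpha>) z"
    then obtain h where h: "dm h = prd A B" "cd h = D" "ple' (prd A B) \<alpha> (pre' (pr (pr1 A B) h) \<zeta>)"
      unfolding zz ex_le_iff by blast
    have m: "ple' (prd ?X ?T) (pre' (pr1 ?X ?T) \<alpha>) (pre' (pr1 ?X ?T) (pre' (pr (pr1 A B) h) \<zeta>))"
      by (rule pre_mono') (use h a cz in simp_all)
    show "ex_le C P (prd A B) (?T, pre' (pr1 ?X ?T) \<alpha>) (ex_re C P (pr1 A B) z)"
      unfolding zz ex_re_pair ex_le_iff
      apply (rule exI[of _ "cmp h (pr1 ?X ?T)"])
      using m h a cz by (simp add: cross_r_def)
  next
    assume "ex_le C P (prd A B) (?T, pre' (pr1 ?X ?T) \<alpha>) (ex_re C P (pr1 A B) z)"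
    then obtain h where h: "dm h = prd ?X ?T" "cd h = D"
      "ple' (prd ?X ?T) (pre' (pr1 ?X ?T) \<alpha>) (pre' (pr (pr1 ?X ?T) h) (pre' (cross_r C (pr1 A B) D) \<zeta>))"
      unfolding zz ex_re_pair ex_le_iff by auto
    let ?j = "pr (c_id C ?X) (c_bang C ?X)"
    have m: "ple' ?X (pre' ?j (pre' (pr1 ?X ?T) \<alpha>)) (pre' ?j (pre' (pr (pr1 ?X ?T) h) (pre' (cross_r C (pr1 A B) D) \<zeta>)))"
      by (rule pre_mono') (use h a cz in \<open>simp_all add: cross_r_def\<close>)
    show "ex_le C P A (B, \<alpha>) z"
      unfolding zz ex_le_iff
      apply (rule exI[of _ "cmp h ?j"])
      using m h a cz by (simp add: cross_r_def)
  qed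
qed

end

context dctx begin

definition g2 where "g2 A1 A2 B = pr (pr (cmp (pr1 A1 (c_exp C A2 B)) (pr1 (prd A1 (c_exp C A2 B)) A2)) (pr2 (prd A1 (c_exp C A2 B)) A2))
   (cmp (c_ev C A2 B) (pr (pr2 (prd A1 (c_exp C A2 B)) A2) (cmp (pr2 A1 (c_exp C A2 B)) (pr1 (prd A1 (c_exp C A2 B)) A2))))"

lemma g2_dom[simp]: "dm (g2 A1 A2 B) = prd (prd A1 (c_exp C A2 B)) A2"
  and g2_cod[simp]: "cd (g2 A1 A2 B) = prd (prd A1 A2) B"
  by (simp_all add: g2_def)

definition Phi where "Phi A1 A2 B \<alpha> = P_forall C P (pr1 (prd A1 (c_exp C A2 B)) A2) (pre' (g2 A1 A2 B) \<alpha>)"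

lemma Phi_closed[simp]: "\<alpha> \<in> Pc' (prd (prd A1 A2) B) \<Longrightarrow> Phi A1 A2 B \<alpha> \<in> Pc' (prd A1 (c_exp C A2 B))"
  unfolding Phi_def by (rule all_closed) simp

lemma Phi_adj: assumes a: "\<alpha> \<in> Pc' (prd (prd A1 A2) B)" and f: "cd f = prd A1 (c_exp C A2 B)"
  and d: "\<delta> \<in> Pc' (dm f)"
  shows "ple' (dm f) \<delta> (pre' f (Phi A1 A2 B \<alpha>)) \<longleftrightarrow>
    ple' (prd (dm f) A2) (pre' (pr1 (dm f) A2) \<delta>) (pre' (cmp (g2 A1 A2 B) (cross_r C f A2)) \<alpha>)"
proof -
  have "pre' f (Phi A1 A2 B \<alpha>) = P_forall C P (pr1 (dm f) A2) (pre' (cross_r C f A2) (pre' (g2 A1 A2 B) \<alpha>))"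
    unfolding Phi_def using BC[of "pre' (g2 A1 A2 B) \<alpha>" f A2] f a by simp
  also have "\<dots> = P_forall C P (pr1 (dm f) A2) (pre' (cmp (g2 A1 A2 B) (cross_r C f A2)) \<alpha>)"
    using f a by simp
  finally show ?thesis using all_adj[of "pre' (cmp (g2 A1 A2 B) (cross_r C f A2)) \<alpha>" "dm f" A2 \<delta>] f a d
    by simp
qed

end

context dctx begin

lemma F1: assumes a: "\<alpha> \<in> Pc' (prd (prd A1 A2) B)"
  shows "ALLP (pr1 A1 A2) (B, \<alpha>) (c_exp C A2 B, Phi A1 A2 B \<alpha>)"
  unfolding ALLP_def
proof (simp add: a, intro ballI)
  fix z assume z: "z \<in> ex_carrier C P A1"
  obtain D \<zeta> where zz: "z = (D,\<zeta>)" by (cases z)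
  have cz: "\<zeta> \<in> Pc' (prd A1 D)" using z zz by simp
  let ?E = "c_exp C A2 B" and ?A = "prd A1 A2"
  show "ex_le C P A1 z (?E, Phi A1 A2 B \<alpha>) = ex_le C P ?A (ex_re C P (pr1 A1 A2) z) (B, \<alpha>)"
  proof
    assume "ex_le C P A1 z (?E, Phi A1 A2 B \<alpha>)"
    then obtain k where k: "dm k = prd A1 D" "cd k = ?E" "ple' (prd A1 D) \<zeta> (pre' (pr (pr1 A1 D) k) (Phi A1 A2 B \<alpha>))"
      unfolding zz ex_le_iff by blast
    have 1: "ple' (prd (prd A1 D) A2) (pre' (pr1 (prd A1 D) A2) \<zeta>) (pre' (cmp (g2 A1 A2 B) (cross_r C (pr (pr1 A1 D) k) A2)) \<alpha>)"
      using Phi_adj[of \<alpha> A1 A2 B "pr (pr1 A1 D) k" \<zeta>] k a cz by simp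
    let ?\<sigma> = "pr (pr (cmp (pr1 A1 A2) (pr1 ?A D)) (pr2 ?A D)) (cmp (pr2 A1 A2) (pr1 ?A D))"
    have 2: "ple' (prd ?A D) (pre' ?\<sigma> (pre' (pr1 (prd A1 D) A2) \<zeta>)) (pre' ?\<sigma> (pre' (cmp (g2 A1 A2 B) (cross_r C (pr (pr1 A1 D) k) A2)) \<alpha>))"
      by (rule pre_mono'[OF _ _ _ _ 1]) (use k a cz in \<open>simp_all add: cross_r_def\<close>)
    show "ex_le C P ?A (ex_re C P (pr1 A1 A2) z) (B, \<alpha>)"
      unfolding zz ex_re_pair ex_le_iff
      apply (rule exI[of _ "cmp (c_ev C A2 B) (pr (cmp (pr2 A1 A2) (pr1 ?A D)) (cmp k (pr (cmp (pr1 A1 A2) (pr1 ?A D)) (pr2 ?A D))))"])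
      using 2 k a cz by (simp add: cross_r_def g2_def)
  next
    assume "ex_le C P ?A (ex_re C P (pr1 A1 A2) z) (B, \<alpha>)"
    then obtain h where h: "dm h = prd ?A D" "cd h = B"
      "ple' (prd ?A D) (pre' (cross_r C (pr1 A1 A2) D) \<zeta>) (pre' (pr (pr1 ?A D) h) \<alpha>)"
      unfolding zz ex_re_pair ex_le_iff by auto
    let ?W = "prd A1 D"
    let ?\<tau>' = "pr (pr (cmp (pr1 A1 D) (pr2 A2 ?W)) (pr1 A2 ?W)) (cmp (pr2 A1 D) (pr2 A2 ?W))"
    have "dm (cmp h ?\<tau>') = prd A2 ?W \<and> cd (cmp h ?\<tau>') = B" using h by simp
    then obtain k where k: "dm k = ?W" "cd k = ?E"
      "cmp (c_ev C A2 B) (pr (pr1 A2 ?W) (cmp k (pr2 A2 ?W))) = cmp h ?\<tau>'"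
      using exs unfolding has_exponents_def by blast
    let ?s = "pr (pr2 ?W A2) (pr1 ?W A2)"
    have ks: "cmp (cmp (c_ev C A2 B) (pr (pr1 A2 ?W) (cmp k (pr2 A2 ?W)))) ?s = cmp (cmp h ?\<tau>') ?s"
      using k by simp
    have ks2: "cmp (c_ev C A2 B) (pr (pr2 ?W A2) (cmp k (pr1 ?W A2))) =
       cmp h (pr (pr (cmp (pr1 A1 D) (pr1 ?W A2)) (pr2 ?W A2)) (cmp (pr2 A1 D) (pr1 ?W A2)))"
      using ks by (simp add: k(1,2) h(1,2))
    let ?\<tau> = "pr (pr (cmp (pr1 A1 D) (pr1 ?W A2)) (pr2 ?W A2)) (cmp (pr2 A1 D) (pr1 ?W A2))"
    have 2: "ple' (prd ?W A2) (pre' ?\<tau> (pre' (cross_r C (pr1 A1 A2) D) \<zeta>)) (pre' ?\<tau> (pre' (pr (pr1 ?A D) h) \<alpha>))"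
      by (rule pre_mono'[OF _ _ _ _ h(3)]) (use h a cz in \<open>simp_all add: cross_r_def\<close>)
    have 3: "ple' (prd (prd A1 D) A2) (pre' (pr1 (prd A1 D) A2) \<zeta>) (pre' (cmp (g2 A1 A2 B) (cross_r C (pr (pr1 A1 D) k) A2)) \<alpha>)"
      using 2 k h a cz ks2 by (simp add: cross_r_def g2_def)
    show "ex_le C P A1 z (?E, Phi A1 A2 B \<alpha>)"
      unfolding zz ex_le_iff
      apply (rule exI[of _ k])
      using Phi_adj[of \<alpha> A1 A2 B "pr (pr1 A1 D) k" \<zeta>] k a cz 3 by simp
  qed
qed

end

context dctx begin

lemma F2: assumes a: "\<alpha> \<in> Pc' (prd (prd A1 A2) B)"
  and E: "E = c_exp C A2 B" and Y: "Y = prd (prd A1 A2) E"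
  and q1: "q1 = cmp (pr1 A1 A2) (pr1 (prd A1 A2) E)"
  and q2: "q2 = cmp (pr2 A1 A2) (pr1 (prd A1 A2) E)"
  and q3: "q3 = pr2 (prd A1 A2) E"
  and g: "g = pr (pr q1 q2) (cmp (c_ev C A2 B) (pr q2 q3))"
  shows "ALLP (pr q1 q3) (c_term C, pre' (pr1 Y (c_term C)) (pre' g \<alpha>))
           (c_term C, pre' (pr1 (prd A1 E) (c_term C)) (Phi A1 A2 B \<alpha>))"
  unfolding ALLP_def
proof (simp add: a E q1 q3, intro ballI)
  let ?T = "c_term C" and ?A = "prd A1 A2" and ?U = "prd A1 (c_exp C A2 B)" and ?E = "c_exp C A2 B"
  let ?m = "pr (cmp (pr1 A1 A2) (pr1 (prd A1 A2) ?E)) (pr2 (prd A1 A2) ?E)"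
  let ?Y = "prd ?A ?E"
  fix z assume z: "z \<in> ex_carrier C P ?U"
  obtain D \<zeta> where zz: "z = (D,\<zeta>)" by (cases z)
  have cz: "\<zeta> \<in> Pc' (prd ?U D)" using z zz by simp
  have L: "ex_le C P ?U (D,\<zeta>) (?T, pre' (pr1 ?U ?T) (Phi A1 A2 B \<alpha>)) \<longleftrightarrow>
      ple' (prd ?U D) \<zeta> (pre' (pr1 ?U D) (Phi A1 A2 B \<alpha>))"
  proof
    assume "ex_le C P ?U (D,\<zeta>) (?T, pre' (pr1 ?U ?T) (Phi A1 A2 B \<alpha>))"
    then obtain h where h: "dm h = prd ?U D" "cd h = ?T" "ple' (prd ?U D) \<zeta> (pre' (pr (pr1 ?U D) h) (pre' (pr1 ?U ?T) (Phi A1 A2 B \<alpha>)))"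
      unfolding ex_le_iff by blast
    then show "ple' (prd ?U D) \<zeta> (pre' (pr1 ?U D) (Phi A1 A2 B \<alpha>))" using a by simp
  next
    assume "ple' (prd ?U D) \<zeta> (pre' (pr1 ?U D) (Phi A1 A2 B \<alpha>))"
    then show "ex_le C P ?U (D,\<zeta>) (?T, pre' (pr1 ?U ?T) (Phi A1 A2 B \<alpha>))"
      unfolding ex_le_iff using a by (intro exI[of _ "c_bang C (prd ?U D)"]) simp
  qed
  have gY: "dm g = ?Y" "cd g = prd ?A B" by (simp_all add: g q1 q2 q3 E)
  have ga: "pre' g \<alpha> \<in> Pc' ?Y" using gY a by simp
  have R: "ex_le C P ?Y (D, pre' (cross_r C ?m D) \<zeta>) (?T, pre' (pr1 ?Y ?T) (pre' g \<alpha>)) \<longleftrightarrow>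
      ple' (prd ?Y D) (pre' (cross_r C ?m D) \<zeta>) (pre' (cmp g (pr1 ?Y D)) \<alpha>)"
  proof
    assume "ex_le C P ?Y (D, pre' (cross_r C ?m D) \<zeta>) (?T, pre' (pr1 ?Y ?T) (pre' g \<alpha>))"
    then obtain h where h: "dm h = prd ?Y D" "cd h = ?T" "ple' (prd ?Y D) (pre' (cross_r C ?m D) \<zeta>) (pre' (pr (pr1 ?Y D) h) (pre' (pr1 ?Y ?T) (pre' g \<alpha>)))"
      unfolding ex_le_iff by blast
    then show "ple' (prd ?Y D) (pre' (cross_r C ?m D) \<zeta>) (pre' (cmp g (pr1 ?Y D)) \<alpha>)" using a gY by simp
  next
    assume "ple' (prd ?Y D) (pre' (cross_r C ?m D) \<zeta>) (pre' (cmp g (pr1 ?Y D)) \<alpha>)"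
    then show "ex_le C P ?Y (D, pre' (cross_r C ?m D) \<zeta>) (?T, pre' (pr1 ?Y ?T) (pre' g \<alpha>))"
      unfolding ex_le_iff using a gY by (intro exI[of _ "c_bang C (prd ?Y D)"]) simp
  qed
  have K: "ple' (prd ?U D) \<zeta> (pre' (pr1 ?U D) (Phi A1 A2 B \<alpha>)) \<longleftrightarrow>
    ple' (prd (prd ?U D) A2) (pre' (pr1 (prd ?U D) A2) \<zeta>) (pre' (cmp (g2 A1 A2 B) (cross_r C (pr1 ?U D) A2)) \<alpha>)"
    using Phi_adj[of \<alpha> A1 A2 B "pr1 ?U D" \<zeta>] a cz by simp
  let ?W = "prd ?U D"
  have M: "ple' (prd (prd ?U D) A2) (pre' (pr1 (prd ?U D) A2) \<zeta>) (pre' (cmp (g2 A1 A2 B) (cross_r C (pr1 ?U D) A2)) \<alpha>)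
     \<longleftrightarrow> ple' (prd ?Y D) (pre' (cross_r C ?m D) \<zeta>) (pre' (cmp g (pr1 ?Y D)) \<alpha>)"
  proof
    assume 1: "ple' (prd (prd ?U D) A2) (pre' (pr1 (prd ?U D) A2) \<zeta>) (pre' (cmp (g2 A1 A2 B) (cross_r C (pr1 ?U D) A2)) \<alpha>)"
    let ?p = "pr1 ?Y D"
    let ?\<sigma> = "pr (pr (pr (cmp (pr1 A1 A2) (cmp (pr1 ?A ?E) ?p)) (cmp (pr2 ?A ?E) ?p)) (pr2 ?Y D)) (cmp (pr2 A1 A2) (cmp (pr1 ?A ?E) ?p))"
    have 2: "ple' (prd ?Y D) (pre' ?\<sigma> (pre' (pr1 (prd ?U D) A2) \<zeta>)) (pre' ?\<sigma> (pre' (cmp (g2 A1 A2 B) (cross_r C (pr1 ?U D) A2)) \<alpha>))"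
      by (rule pre_mono'[OF _ _ _ _ 1]) (use a cz in \<open>simp_all add: cross_r_def\<close>)
    then show "ple' (prd ?Y D) (pre' (cross_r C ?m D) \<zeta>) (pre' (cmp g (pr1 ?Y D)) \<alpha>)"
      using a cz by (simp add: cross_r_def g2_def g q1 q2 q3 E)
  next
    assume 1: "ple' (prd ?Y D) (pre' (cross_r C ?m D) \<zeta>) (pre' (cmp g (pr1 ?Y D)) \<alpha>)"
    let ?p = "pr1 ?W A2"
    let ?\<tau> = "pr (pr (pr (cmp (pr1 A1 ?E) (cmp (pr1 ?U D) ?p)) (pr2 ?W A2)) (cmp (pr2 A1 ?E) (cmp (pr1 ?U D) ?p))) (cmp (pr2 ?U D) ?p)"
    have 2: "ple' (prd ?W A2) (pre' ?\<tau> (pre' (cross_r C ?m D) \<zeta>)) (pre' ?\<tau> (pre' (cmp g (pr1 ?Y D)) \<alpha>))"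
      by (rule pre_mono'[OF _ _ _ _ 1]) (use a cz gY in \<open>simp_all add: cross_r_def\<close>)
    then show "ple' (prd (prd ?U D) A2) (pre' (pr1 (prd ?U D) A2) \<zeta>) (pre' (cmp (g2 A1 A2 B) (cross_r C (pr1 ?U D) A2)) \<alpha>)"
      using a cz by (simp add: cross_r_def g2_def g q1 q2 q3 E)
  qed
  show "ex_le C P ?U z (?T, pre' (pr1 ?U ?T) (Phi A1 A2 B \<alpha>)) =
         ex_le C P ?Y (ex_re C P ?m z) (?T, pre' (pr1 Y ?T) (pre' g \<alpha>))"
    unfolding zz ex_re_pair using L R K M Y E by simp
qed

end


theorem theorem12:
  fixes C :: "('o, 'm) cat" and P :: "('o, 'm, 'p) doctr"
    and A1 A2 B :: 'o and \<alpha> :: 'p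
  assumes "is_category C" and "has_finite_products C" and "has_exponents C"
    and "doctrine C P" and "universal C P"
    and "\<alpha> \<in> Pc P (c_prod C (c_prod C A1 A2) B)"
  shows
    "let X = c_prod C (c_prod C A1 A2) B;
         E = c_exp C A2 B;
         Y = c_prod C (c_prod C A1 A2) E;
         q1 = c_comp C (c_p1 C A1 A2) (c_p1 C (c_prod C A1 A2) E);
         q2 = c_comp C (c_p2 C A1 A2) (c_p1 C (c_prod C A1 A2) E);
         q3 = c_p2 C (c_prod C A1 A2) E;
         g = c_pair C (c_pair C q1 q2) (c_comp C (c_ev C A2 B) (c_pair C q2 q3));
         lhs = ex_forall C P (c_p1 C A1 A2)
                 (ex_exists C P (c_p1 C (c_prod C A1 A2) B) (ex_eta C P X \<alpha>));
         rhs = ex_exists C P (c_p1 C A1 E)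
                 (ex_forall C P (c_pair C q1 q3) (ex_eta C P Y (pre P g \<alpha>)))
     in ex_eq C P A1 lhs rhs"
proof -
  interpret dctx C P using assms(1-5) by unfold_locales
  have a: "\<alpha> \<in> Pc P (c_prod C (c_prod C A1 A2) B)" by fact
  define A where "A = c_prod C A1 A2"
  define X where "X = c_prod C A B"
  define E where "E = c_exp C A2 B"
  define Y where "Y = c_prod C A E"
  define q1 where "q1 = c_comp C (c_p1 C A1 A2) (c_p1 C A E)"
  define q2 where "q2 = c_comp C (c_p2 C A1 A2) (c_p1 C A E)"
  define q3 where "q3 = c_p2 C A E"
  define g where "g = c_pair C (c_pair C q1 q2) (c_comp C (c_ev C A2 B) (c_pair C q2 q3))"
  define \<Phi> where "\<Phi> = Phi A1 A2 B \<alpha>"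
  define S1 where "S1 = ex_exists C P (c_p1 C A B) (ex_eta C P X \<alpha>)"
  define L where "L = ex_forall C P (c_p1 C A1 A2) S1"
  define F where "F = ex_forall C P (c_pair C q1 q3) (ex_eta C P Y (pre P g \<alpha>))"
  define R where "R = ex_exists C P (c_p1 C A1 E) F"
  have aA: "\<alpha> \<in> Pc P (c_prod C A B)" using a A_def by simp
  have e1: "EXP (pr1 A B) (ex_eta C P X \<alpha>) (B, \<alpha>)"
    unfolding ex_eta_def X_def by (rule Lex[OF aA])
  have s1: "EXP (pr1 A B) (ex_eta C P X \<alpha>) S1" unfolding S1_def by (rule EXP_some[OF e1])
  have s1eq: "ex_eq C P A S1 (B, \<alpha>)" using EXP_unique[OF s1 e1] by simp
  have s1c: "S1 \<in> ex_carrier C P A" using EXP_carrier[OF s1] by simp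
  have f1: "ALLP (pr1 A1 A2) (B, \<alpha>) (E, \<Phi>)" unfolding E_def \<Phi>_def by (rule F1[OF a])
  have f1': "ALLP (pr1 A1 A2) S1 (E, \<Phi>)"
    by (rule ALLP_transfer[OF _ _ _ f1]) (use s1c s1eq aA A_def in simp_all)
  have l: "ALLP (pr1 A1 A2) S1 L" unfolding L_def by (rule ALLP_some[OF f1'])
  have leq: "ex_eq C P A1 L (E, \<Phi>)" using ALLP_unique[OF l f1'] by simp
  have f2: "ALLP (pr q1 q3) (ex_eta C P Y (pre P g \<alpha>)) (c_term C, pre P (pr1 (prd A1 E) (c_term C)) \<Phi>)"
    unfolding ex_eta_def \<Phi>_def
    by (rule F2[OF a E_def]) (simp_all only: Y_def A_def q1_def q2_def q3_def g_def)
  have fF: "ALLP (pr q1 q3) (ex_eta C P Y (pre P g \<alpha>)) F" unfolding F_def by (rule ALLP_some[OF f2])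
  have cdm: "cd (pr q1 q3) = prd A1 E" by (simp add: q1_def q3_def A_def)
  have Feq: "ex_eq C P (prd A1 E) F (c_term C, pre P (pr1 (prd A1 E) (c_term C)) \<Phi>)"
    using ALLP_unique[OF fF f2] cdm by simp
  have Fc: "F \<in> ex_carrier C P (prd A1 E)" using ALLP_carrier[OF fF] cdm by simp
  have \<Phi>c: "\<Phi> \<in> Pc P (prd A1 E)" unfolding \<Phi>_def E_def using a by simp
  have e2: "EXP (pr1 A1 E) (c_term C, pre P (pr1 (prd A1 E) (c_term C)) \<Phi>) (E, \<Phi>)"
    by (rule Lex[OF \<Phi>c])
  have e2': "EXP (pr1 A1 E) F (E, \<Phi>)"
    by (rule EXP_transfer[OF _ _ _ e2]) (use Fc Feq \<Phi>c in simp_all)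
  have r: "EXP (pr1 A1 E) F R" unfolding R_def by (rule EXP_some[OF e2'])
  have req: "ex_eq C P A1 R (E, \<Phi>)" using EXP_unique[OF r e2'] by simp
  have Lc: "L \<in> ex_carrier C P A1" using ALLP_carrier[OF l] by simp
  have Rc: "R \<in> ex_carrier C P A1" using EXP_carrier[OF r] by simp
  have fin: "ex_eq C P A1 L R"
    by (rule eq_trans[OF Lc _ Rc leq eq_sym[OF req]]) (use \<Phi>c in simp)
  show ?thesis unfolding Let_def
    using fin unfolding L_def R_def S1_def F_def X_def Y_def A_def E_def q1_def q2_def q3_def g_def .
qed

end
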